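(* Consider a storage system for two files $a$ and $b$ consisting of $C\ge0$ coded nodes and no systematic nodes, each node with service rate $\mu>0$, in which any two distinct coded nodes together can recover file $a$ and can recover file $b$. If $C>1$, the service capacity region is the region bounded by $\lambda_a=0$, $\lambda_b=0$ and $\lambda_b=\frac{C}{2}\mu-\lambda_a$, i.e. $\{(\lambda_a,\lambda_b)\in\mathbb{R}_{\ge0}^2:\lambda_a+\lambda_b\le\frac{C}{2}\mu\}$. If $C\le1$, the service capacity region is the single point $(0,0)$.
   Context: The recovering sets of each file are exactly the $2$-element subsets of the set of $C$ coded nodes (a single coded node cannot recover either file). Requests for $a$ and $b$ arrive at rates $\lambda_a,\lambda_b\ge0$. The service capacity region is the set of $(\lambda_a,\lambda_b)$ for which there exist nonnegative rates assigned to the recovering sets of $a$ summing to $\lambda_a$ and to the recovering sets of $b$ summing to $\lambda_b$, such that for every node the total rate assigned to recovering sets containing it is at most $\mu$. (Here the total number of nodes is $N=C$.) *)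

theory Defs
  imports Main Complex_Main
begin

definition recovering_sets :: "nat \<Rightarrow> nat set set" where
  "recovering_sets C = {S. S \<subseteq> {..<C} \<and> card S = 2}"

definition capacity_region :: "nat \<Rightarrow> real \<Rightarrow> (real \<times> real) set" where
  "capacity_region C mu = {(la, lb). la \<ge> 0 \<and> lb \<ge> 0 \<and>
     (\<exists>xa xb :: nat set \<Rightarrow> real.
        (\<forall>S\<in>recovering_sets C. xa S \<ge> 0 \<and> xb S \<ge> 0) \<and>
        (\<Sum>S\<in>recovering_sets C. xa S) = la \<and>
        (\<Sum>S\<in>recovering_sets C. xb S) = lb \<and>
        (\<forall>i<C. (\<Sum>S\<in>{S\<in>recovering_sets C. i \<in> S}. xa S + xb S) \<le> mu))}"

end

theory Submission
  imports Defs
begin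

lemma fin_rs: "finite (recovering_sets C)"
  unfolding recovering_sets_def
  by (rule finite_subset[of _ "Pow {..<C}"]) auto

lemma dc:
  fixes f :: "nat set \<Rightarrow> real"
  shows "(\<Sum>i<C. \<Sum>S\<in>{S\<in>recovering_sets C. i \<in> S}. f S) = 2 * (\<Sum>S\<in>recovering_sets C. f S)"
proof -
  have "(\<Sum>i<C. \<Sum>S\<in>{S\<in>recovering_sets C. i \<in> S}. f S)
      = (\<Sum>i<C. \<Sum>S\<in>recovering_sets C. if i \<in> S then f S else 0)"
    by (rule sum.cong[OF refl]) (simp add: sum.inter_filter[OF fin_rs])
  also have "\<dots> = (\<Sum>S\<in>recovering_sets C. \<Sum>i<C. if i \<in> S then f S else 0)"
    by (rule sum.swap)
  also have "\<dots> = (\<Sum>S\<in>recovering_sets C. 2 * f S)"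
  proof (rule sum.cong[OF refl])
    fix S assume S: "S \<in> recovering_sets C"
    have "(\<Sum>i<C. if i \<in> S then f S else 0) = (\<Sum>i\<in>{i\<in>{..<C}. i \<in> S}. f S)"
      by (rule sum.inter_filter[symmetric]) simp
    also have "{i\<in>{..<C}. i \<in> S} = S" using S by (auto simp: recovering_sets_def)
    finally show "(\<Sum>i<C. if i \<in> S then f S else 0) = 2 * f S"
      using S by (simp add: recovering_sets_def)
  qed
  finally show ?thesis by (simp add: sum_distrib_left)
qed

lemma star_card:
  assumes "i < C"
  shows "card {S\<in>recovering_sets C. i \<in> S} = C - 1"
proof -
  have eq: "{S\<in>recovering_sets C. i \<in> S} = (\<lambda>j. {i,j}) ` ({..<C} - {i})"
  proof
    show "{S\<in>recovering_sets C. i \<in> S} \<subseteq> (\<lambda>j. {i,j}) ` ({..<C} - {i})"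
    proof
      fix S assume "S \<in> {S\<in>recovering_sets C. i \<in> S}"
      then have S: "S \<subseteq> {..<C}" "card S = 2" "i \<in> S" by (auto simp: recovering_sets_def)
      then obtain a b where ab: "S = {a,b}" "a \<noteq> b" by (meson card_2_iff)
      show "S \<in> (\<lambda>j. {i,j}) ` ({..<C} - {i})"
      proof (cases "a = i")
        case True then show ?thesis using ab S by auto
      next
        case False then have "b = i" using ab S by auto
        then show ?thesis using ab S by (intro image_eqI[of _ _ a]) auto
      qed
    qed
  next
    show "(\<lambda>j. {i,j}) ` ({..<C} - {i}) \<subseteq> {S\<in>recovering_sets C. i \<in> S}"
      using assms by (auto simp: recovering_sets_def)
  qed
  have "inj_on (\<lambda>j. {i,j}) ({..<C} - {i})"
    by (auto simp: inj_on_def doubleton_eq_iff)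
  then show ?thesis unfolding eq using assms by (simp add: card_image)
qed

lemma small: "C \<le> 1 \<Longrightarrow> recovering_sets C = {}"
proof -
  assume "C \<le> 1"
  { fix S assume "S \<subseteq> {..<C}" "card S = 2"
    then have "card S \<le> card {..<C}" by (intro card_mono) auto
    with \<open>card S = 2\<close> \<open>C \<le> 1\<close> have False by simp }
  then show ?thesis unfolding recovering_sets_def by auto
qed

theorem lemma4:
  fixes C :: nat and mu :: real
  assumes "mu > 0"
  shows "(C > 1 \<longrightarrow> capacity_region C mu =
            {(la, lb). la \<ge> 0 \<and> lb \<ge> 0 \<and> la + lb \<le> real C / 2 * mu})
       \<and> (C \<le> 1 \<longrightarrow> capacity_region C mu = {(0, 0)})"
proof (intro conjI impI)
  assume "C \<le> 1"
  then have R: "recovering_sets C = {}" by (rule small)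
  show "capacity_region C mu = {(0, 0)}"
    unfolding capacity_region_def R using assms by auto
next
  assume C1: "C > 1"
  let ?R = "recovering_sets C"
  show "capacity_region C mu = {(la, lb). la \<ge> 0 \<and> lb \<ge> 0 \<and> la + lb \<le> real C / 2 * mu}"
  proof
    show "capacity_region C mu \<subseteq> {(la, lb). la \<ge> 0 \<and> lb \<ge> 0 \<and> la + lb \<le> real C / 2 * mu}"
    proof clarify
      fix la lb assume "(la, lb) \<in> capacity_region C mu"
      then obtain xa xb where h: "la \<ge> 0" "lb \<ge> 0"
        "(\<Sum>S\<in>?R. xa S) = la" "(\<Sum>S\<in>?R. xb S) = lb"
        "\<forall>i<C. (\<Sum>S\<in>{S\<in>?R. i \<in> S}. xa S + xb S) \<le> mu"
        unfolding capacity_region_def by auto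
      have "2 * (la + lb) = (\<Sum>i<C. \<Sum>S\<in>{S\<in>?R. i \<in> S}. xa S + xb S)"
        using dc[of "\<lambda>S. xa S + xb S" C] h(3,4) by (simp add: sum.distrib)
      also have "\<dots> \<le> (\<Sum>i<C. mu)" by (rule sum_mono) (use h(5) in auto)
      finally have "2 * (la + lb) \<le> real C * mu" by simp
      then show "la \<ge> 0 \<and> lb \<ge> 0 \<and> la + lb \<le> real C / 2 * mu" using h by simp
    qed
  next
    show "{(la, lb). la \<ge> 0 \<and> lb \<ge> 0 \<and> la + lb \<le> real C / 2 * mu} \<subseteq> capacity_region C mu"
    proof clarify
      fix la lb :: real assume h: "la \<ge> 0" "lb \<ge> 0" "la + lb \<le> real C / 2 * mu"
      define N where "N = real (card ?R)"
      define M where "M = real (C - 1)"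
      have "2 * N = (\<Sum>i<C. \<Sum>S\<in>{S\<in>?R. i \<in> S}. (1::real))"
        using dc[of "\<lambda>_. 1" C] by (simp add: N_def)
      also have "\<dots> = (\<Sum>i<C. M)" by (rule sum.cong) (auto simp: star_card M_def)
      also have "\<dots> = real C * M" by simp
      finally have N2: "2 * N = real C * M" .
      have Cm: "M > 0" using C1 by (simp add: M_def)
      have Cp: "real C > 0" using C1 by simp
      have Npos: "N > 0" using N2 Cm Cp mult_pos_pos[OF Cp Cm] by linarith
      define xa where "xa = (\<lambda>S::nat set. la / N)"
      define xb where "xb = (\<lambda>S::nat set. lb / N)"
      have s1: "(\<Sum>S\<in>?R. xa S) = la" using Npos by (simp add: xa_def N_def[symmetric])
      have s2: "(\<Sum>S\<in>?R. xb S) = lb" using Npos by (simp add: xb_def N_def[symmetric])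
      have load: "(\<Sum>S\<in>{S\<in>?R. i \<in> S}. xa S + xb S) \<le> mu" if i: "i < C" for i
      proof -
        have "(\<Sum>S\<in>{S\<in>?R. i \<in> S}. xa S + xb S) = M * ((la + lb) / N)"
          using i by (simp add: xa_def xb_def star_card add_divide_distrib M_def)
        also have "N = real C * M / 2" using N2 by simp
        also have "M * ((la + lb) / (real C * M / 2)) = 2 * (la + lb) / real C"
          using Cm Cp by (simp add: field_simps)
        also have "\<dots> \<le> mu" using h(3) Cp by (simp add: field_simps)
        finally show ?thesis .
      qed
      show "(la, lb) \<in> capacity_region C mu"
      proof -
        have nn: "\<forall>S\<in>?R. xa S \<ge> 0 \<and> xb S \<ge> 0" using h Npos by (simp add: xa_def xb_def)
        have "\<exists>xa xb :: nat set \<Rightarrow> real.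
          (\<forall>S\<in>?R. xa S \<ge> 0 \<and> xb S \<ge> 0) \<and>
          (\<Sum>S\<in>?R. xa S) = la \<and> (\<Sum>S\<in>?R. xb S) = lb \<and>
          (\<forall>i<C. (\<Sum>S\<in>{S\<in>?R. i \<in> S}. xa S + xb S) \<le> mu)"
          using nn s1 s2 load by blast
        then show ?thesis using h(1,2) unfolding capacity_region_def by simp
      qed
    qed
  qed
qed

end
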